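(* Let $Q$ be a finite Moufang loop, $S\le Q$, and $x,y\in Q$ with $xS\cap yS\neq\emptyset$. Let $f_{x,y}:xS\cap yS\to xS\cap yS$ be the permutation $xs\mapsto ys$. Let $xs=yr\in xS\cap yS$ with $s,r\in S$. Then $xs$ belongs to a cycle of $f_{x,y}$ whose length is the order $|sr^{-1}|$ of the element $sr^{-1}\in S$. In particular, if $S\neq 1$, then $|xS\cap yS|$ can be written as a sum of orders of some (possibly repeated) nonidentity elements of $S$.
   Context: A Moufang loop is a loop satisfying $((xy)x)z=x(y(xz))$ (equivalently $((xy)z)y=x(y(zy))$, etc.); Moufang loops have two-sided inverses $x^{-1}$ and are right Bol, which guarantees that $f_{x,y}$ is a well-defined permutation of $xS\cap yS$. Here $xS=\{xs:s\in S\}$. *)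

theory Defs
  imports Main
begin

definition loop :: "'a set \<Rightarrow> ('a \<Rightarrow> 'a \<Rightarrow> 'a) \<Rightarrow> 'a \<Rightarrow> bool" where
  "loop Q mult e \<longleftrightarrow>
     e \<in> Q \<and>
     (\<forall>a\<in>Q. \<forall>b\<in>Q. mult a b \<in> Q) \<and>
     (\<forall>a\<in>Q. mult e a = a \<and> mult a e = a) \<and>
     (\<forall>a\<in>Q. \<forall>b\<in>Q. \<exists>!x. x \<in> Q \<and> mult a x = b) \<and>
     (\<forall>a\<in>Q. \<forall>b\<in>Q. \<exists>!y. y \<in> Q \<and> mult y a = b)"

definition moufang_loop :: "'a set \<Rightarrow> ('a \<Rightarrow> 'a \<Rightarrow> 'a) \<Rightarrow> 'a \<Rightarrow> bool" where
  "moufang_loop Q mult e \<longleftrightarrow> loop Q mult e \<and>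
     (\<forall>x\<in>Q. \<forall>y\<in>Q. \<forall>z\<in>Q. mult (mult (mult x y) x) z = mult x (mult y (mult x z)))"

definition subloop :: "'a set \<Rightarrow> 'a set \<Rightarrow> ('a \<Rightarrow> 'a \<Rightarrow> 'a) \<Rightarrow> 'a \<Rightarrow> bool" where
  "subloop S Q mult e \<longleftrightarrow> S \<subseteq> Q \<and> loop S mult e"

text \<open>Two-sided inverse (exists in Moufang loops).\<close>
definition loop_inv :: "'a set \<Rightarrow> ('a \<Rightarrow> 'a \<Rightarrow> 'a) \<Rightarrow> 'a \<Rightarrow> 'a \<Rightarrow> 'a" where
  "loop_inv Q mult e x = (THE y. y \<in> Q \<and> mult x y = e \<and> mult y x = e)"

primrec loop_pow :: "('a \<Rightarrow> 'a \<Rightarrow> 'a) \<Rightarrow> 'a \<Rightarrow> 'a \<Rightarrow> nat \<Rightarrow> 'a" where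
  "loop_pow mult e x 0 = e"
| "loop_pow mult e x (Suc n) = mult x (loop_pow mult e x n)"

text \<open>Order of an element (powers are well defined since Moufang loops are power-associative).\<close>
definition loop_order :: "('a \<Rightarrow> 'a \<Rightarrow> 'a) \<Rightarrow> 'a \<Rightarrow> 'a \<Rightarrow> nat" where
  "loop_order mult e x = (LEAST n. 0 < n \<and> loop_pow mult e x n = e)"

definition lcoset :: "('a \<Rightarrow> 'a \<Rightarrow> 'a) \<Rightarrow> 'a \<Rightarrow> 'a set \<Rightarrow> 'a set" where
  "lcoset mult x S = (\<lambda>s. mult x s) ` S"

definition fxy :: "('a \<Rightarrow> 'a \<Rightarrow> 'a) \<Rightarrow> 'a set \<Rightarrow> 'a \<Rightarrow> 'a \<Rightarrow> 'a \<Rightarrow> 'a" where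
  "fxy mult S x y z = mult y (THE s. s \<in> S \<and> mult x s = z)"

definition cycle_length :: "('a \<Rightarrow> 'a) \<Rightarrow> 'a \<Rightarrow> nat" where
  "cycle_length f z = (LEAST n. 0 < n \<and> (f ^^ n) z = z)"

end

theory Submission
  imports Defs
begin

lemma funpow_in: "g ` A \<subseteq> A \<Longrightarrow> z \<in> A \<Longrightarrow> (g^^n) z \<in> A"
  by (induction n) auto

lemma cancel_pow:
  assumes "inj_on g A" "g ` A \<subseteq> A" "z \<in> A"
  shows "i \<le> j \<Longrightarrow> (g^^i) z = (g^^j) z \<Longrightarrow> (g^^(j-i)) z = z"
proof (induction i arbitrary: j)
  case 0 then show ?case by simp
next
  case (Suc i)
  then obtain j' where j: "j = Suc j'" by (cases j) auto
  have "g ((g^^i) z) = g ((g^^j') z)" using Suc.prems j by simp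
  then have "(g^^i) z = (g^^j') z"
    using inj_onD[OF assms(1)] funpow_in[OF assms(2,3)] by blast
  then show ?case using Suc j by simp
qed

lemma exists_period:
  assumes "finite A" "g ` A \<subseteq> A" "inj_on g A" "z \<in> A"
  shows "\<exists>n>0. (g^^n) z = z"
proof -
  have "\<not> inj_on (\<lambda>k. (g^^k) z) {..card A}"
  proof
    assume "inj_on (\<lambda>k. (g^^k) z) {..card A}"
    moreover have "(\<lambda>k. (g^^k) z) ` {..card A} \<subseteq> A" using funpow_in[OF assms(2,4)] by auto
    ultimately have "card {..card A} \<le> card A" using card_inj_on_le assms(1) by blast
    then show False by simp
  qed
  then obtain i j where ij: "i \<noteq> j" "(g^^i) z = (g^^j) z" unfolding inj_on_def by blast
  show ?thesis
  proof (cases "i < j")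
    case True
    then show ?thesis using cancel_pow[OF assms(3,2,4), of i j] ij by (intro exI[of _ "j-i"]) auto
  next
    case False
    then show ?thesis using cancel_pow[OF assms(3,2,4), of j i] ij by (intro exI[of _ "i-j"]) auto
  qed
qed

lemma perm_sum_aux:
  "card A = n \<Longrightarrow> finite A \<Longrightarrow> g ` A \<subseteq> A \<Longrightarrow> inj_on g A \<Longrightarrow>
   \<forall>z\<in>A. \<exists>t\<in>T. cycle_length g z = h t \<Longrightarrow>
   \<exists>ts. set ts \<subseteq> T \<and> card A = (\<Sum>t\<leftarrow>ts. h t)"
proof (induction n arbitrary: A rule: less_induct)
  case (less n A)
  note fin = less.prems(2) and gA = less.prems(3) and inj = less.prems(4) and cyc = less.prems(5)
  show ?case
  proof (cases "A = {}")
    case True then show ?thesis by (intro exI[of _ "[]"]) simp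
  next
    case False
    then obtain z where z: "z \<in> A" by blast
    define c where "c = cycle_length g z"
    obtain n0 where n0: "0<n0" "(g^^n0) z = z" using exists_period[OF fin gA inj z] by blast
    have c1: "0 < c \<and> (g^^c) z = z" unfolding c_def cycle_length_def
      by (rule LeastI[of _ n0]) (use n0 in blast)
    have c2: "\<And>k. 0<k \<Longrightarrow> k<c \<Longrightarrow> (g^^k) z \<noteq> z" unfolding c_def cycle_length_def
      using not_less_Least by blast
    define Orb where "Orb = (\<lambda>k. (g^^k) z) ` {..<c}"
    have OA: "Orb \<subseteq> A" unfolding Orb_def using funpow_in[OF gA z] by blast
    have injO: "inj_on (\<lambda>k. (g^^k) z) {..<c}"
    proof (rule inj_onI)
      fix i j assume ij: "i \<in> {..<c}" "j \<in> {..<c}" "(g^^i) z = (g^^j) z"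
      show "i = j"
      proof (rule ccontr)
        assume "i \<noteq> j"
        then consider "i<j" | "j<i" by linarith
        then show False
        proof cases
          case 1
          then have "(g^^(j-i)) z = z" using cancel_pow[OF inj gA z, of i j] ij(3) by simp
          moreover have "0 < j - i" "j - i < c" using 1 ij(2) by auto
          ultimately show False using c2 by blast
        next
          case 2
          then have "(g^^(i-j)) z = z" using cancel_pow[OF inj gA z, of j i] ij(3) by simp
          moreover have "0 < i - j" "i - j < c" using 2 ij(1) by auto
          ultimately show False using c2 by blast
        qed
      qed
    qed
    have cardO: "card Orb = c" unfolding Orb_def using card_image[OF injO] by simp
    have inv: "g ` (A - Orb) \<subseteq> A - Orb"
    proof
      fix w assume "w \<in> g ` (A - Orb)"
      then obtain v where v: "v \<in> A" "v \<notin> Orb" "w = g v" by blast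
      have "w \<in> A" using v gA by blast
      moreover have "w \<notin> Orb"
      proof
        assume "w \<in> Orb"
        then obtain k where k: "k < c" "w = (g^^k) z" unfolding Orb_def by blast
        show False
        proof (cases k)
          case 0
          obtain c' where cS: "c = Suc c'" using c1 by (cases c) auto
          have "(g^^c) z = g ((g^^(c-1)) z)" unfolding cS by simp
          then have "g v = g ((g^^(c-1)) z)" using c1 k v 0 by simp
          then have "v = (g^^(c-1)) z"
            using inj_onD[OF inj] v(1) funpow_in[OF gA z] by blast
          moreover have "(g^^(c-1)) z \<in> Orb" unfolding Orb_def using c1 by simp
          ultimately show False using v(2) by simp
        next
          case (Suc k')
          then have "g v = g ((g^^k') z)" using k v by simp
          then have "v = (g^^k') z"
            using inj_onD[OF inj] v(1) funpow_in[OF gA z] by blast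
          moreover have "(g^^k') z \<in> Orb" unfolding Orb_def using k Suc by simp
          ultimately show False using v(2) by simp
        qed
      qed
      ultimately show "w \<in> A - Orb" by simp
    qed
    have fO: "finite Orb" using OA fin finite_subset by blast
    have cd: "card (A - Orb) = card A - card Orb" using card_Diff_subset[OF fO OA] .
    have le: "card Orb \<le> card A" using card_mono[OF fin OA] .
    then have lt: "card (A - Orb) < n" using cd cardO c1 less.prems(1) by linarith
    have fin2: "finite (A - Orb)" using fin by simp
    have inj2: "inj_on g (A - Orb)" using inj_on_subset[OF inj] by blast
    have cyc2: "\<forall>z\<in>A - Orb. \<exists>t\<in>T. cycle_length g z = h t" using cyc by blast
    obtain ts where ts: "set ts \<subseteq> T" "card (A-Orb) = (\<Sum>t\<leftarrow>ts. h t)"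
      using less.IH[OF lt refl fin2 inv inj2 cyc2] by blast
    obtain t where t: "t\<in>T" "c = h t" using cyc z c_def by blast
    have "card A = h t + (\<Sum>t\<leftarrow>ts. h t)" using ts(2) t(2) cd cardO le by linarith
    then show ?thesis using ts t by (intro exI[of _ "t # ts"]) simp
  qed
qed

lemma perm_sum:
  "finite A \<Longrightarrow> g ` A \<subseteq> A \<Longrightarrow> inj_on g A \<Longrightarrow> \<forall>z\<in>A. \<exists>t\<in>T. cycle_length g z = h t \<Longrightarrow>
   \<exists>ts. set ts \<subseteq> T \<and> card A = (\<Sum>t\<leftarrow>ts. h t)"
  by (rule perm_sum_aux[OF refl])

locale mouf = fixes Q m e assumes ml: "moufang_loop Q m e"
begin

abbreviation iv where "iv a \<equiv> loop_inv Q m e a"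

lemma mouf_all: "e \<in> Q \<and>
     (\<forall>a\<in>Q. \<forall>b\<in>Q. m a b \<in> Q) \<and>
     (\<forall>a\<in>Q. m e a = a \<and> m a e = a) \<and>
     (\<forall>a\<in>Q. \<forall>b\<in>Q. \<exists>!x. x \<in> Q \<and> m a x = b) \<and>
     (\<forall>a\<in>Q. \<forall>b\<in>Q. \<exists>!y. y \<in> Q \<and> m y a = b) \<and>
     (\<forall>x\<in>Q. \<forall>y\<in>Q. \<forall>z\<in>Q. m (m (m x y) x) z = m x (m y (m x z)))"
  using ml unfolding moufang_loop_def loop_def by (elim conjE) (intro conjI)

lemma e_in: "e \<in> Q" using mouf_all by (rule conjunct1)
lemma closed: "a\<in>Q \<Longrightarrow> b\<in>Q \<Longrightarrow> m a b \<in> Q"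
  using mouf_all[THEN conjunct2, THEN conjunct1] by blast
lemma lid: "a\<in>Q \<Longrightarrow> m e a = a"
  using mouf_all[THEN conjunct2, THEN conjunct2, THEN conjunct1] by (drule bspec) (erule conjunct1)
lemma rid: "a \<in> Q \<Longrightarrow> m a e = a"
  using mouf_all[THEN conjunct2, THEN conjunct2, THEN conjunct1] by (drule bspec) (erule conjunct2)
lemma ldiv: "a\<in>Q \<Longrightarrow> b\<in>Q \<Longrightarrow> \<exists>!x. x\<in>Q \<and> m a x = b"
  using mouf_all[THEN conjunct2, THEN conjunct2, THEN conjunct2, THEN conjunct1] by blast
lemma rdiv: "a\<in>Q \<Longrightarrow> b\<in>Q \<Longrightarrow> \<exists>!y. y\<in>Q \<and> m y a = b"
  using mouf_all[THEN conjunct2, THEN conjunct2, THEN conjunct2, THEN conjunct2, THEN conjunct1] by blast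
lemma bol: "x\<in>Q \<Longrightarrow> y\<in>Q \<Longrightarrow> z\<in>Q \<Longrightarrow> m (m (m x y) x) z = m x (m y (m x z))"
  using mouf_all[THEN conjunct2, THEN conjunct2, THEN conjunct2, THEN conjunct2, THEN conjunct2]
  by blast

lemma lcancel: "a\<in>Q \<Longrightarrow> x\<in>Q \<Longrightarrow> y\<in>Q \<Longrightarrow> m a x = m a y \<Longrightarrow> x = y"
proof -
  assume h: "a\<in>Q" "x\<in>Q" "y\<in>Q" "m a x = m a y"
  have "m a x \<in> Q" using closed h by blast
  from ldiv[OF h(1) this] obtain z where z: "\<forall>w. w\<in>Q \<and> m a w = m a x \<longrightarrow> w = z"
    by (elim ex1E) blast
  have "x = z" using spec[OF z, of x] h(2) by blast
  moreover have "y = z" using spec[OF z, of y] h(3,4) by argo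
  ultimately show "x = y" by simp
qed

lemma rcancel: "a\<in>Q \<Longrightarrow> x\<in>Q \<Longrightarrow> y\<in>Q \<Longrightarrow> m x a = m y a \<Longrightarrow> x = y"
proof -
  assume h: "a\<in>Q" "x\<in>Q" "y\<in>Q" "m x a = m y a"
  have "m x a \<in> Q" using closed h by blast
  from rdiv[OF h(1) this] obtain z where z: "\<forall>w. w\<in>Q \<and> m w a = m x a \<longrightarrow> w = z"
    by (elim ex1E) blast
  have "x = z" using spec[OF z, of x] h(2) by blast
  moreover have "y = z" using spec[OF z, of y] h(3,4) by argo
  ultimately show "x = y" by simp
qed

lemma flex: "x\<in>Q \<Longrightarrow> y\<in>Q \<Longrightarrow> m (m x y) x = m x (m y x)"
proof -
  assume h: "x\<in>Q" "y\<in>Q"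
  have "m (m (m x y) x) e = m x (m y (m x e))" using bol[OF h e_in] .
  then show ?thesis using rid h closed by simp
qed

lemma inv_ex: assumes a: "a\<in>Q" shows "\<exists>r\<in>Q. m a r = e \<and> m r a = e"
proof -
  obtain r where r: "r \<in> Q" "m a r = e" using ldiv[OF a e_in] by blast
  have "m (m (m a r) a) e = m a (m r (m a e))" using bol[OF a r(1) e_in] .
  then have "a = m a (m r a)" using r a lid rid e_in closed by simp
  then have "m a e = m a (m r a)" using a rid by simp
  then have "m r a = e" using lcancel[OF a e_in, of "m r a"] closed r a by simp
  then show ?thesis using r by blast
qed

lemma iv: assumes a: "a\<in>Q" shows "iv a \<in> Q \<and> m a (iv a) = e \<and> m (iv a) a = e"
proof -
  obtain r where r: "r\<in>Q" "m a r = e" "m r a = e" using inv_ex[OF a] by blast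
  have "iv a = r" unfolding loop_inv_def
  proof (rule the_equality)
    show "r \<in> Q \<and> m a r = e \<and> m r a = e" using r by blast
    fix y assume "y \<in> Q \<and> m a y = e \<and> m y a = e"
    then show "y = r" using lcancel[OF a, of y r] r by simp
  qed
  then show ?thesis using r by simp
qed

lemma iv_eq: "a\<in>Q \<Longrightarrow> y\<in>Q \<Longrightarrow> m a y = e \<Longrightarrow> iv a = y"
  using iv[of a] lcancel[of a "iv a" y] by simp

lemma iv_iv: "a\<in>Q \<Longrightarrow> iv (iv a) = a"
  using iv[of a] iv_eq[of "iv a" a] by simp

lemma lip: assumes "a\<in>Q" "z\<in>Q" shows "m (iv a) (m a z) = z"
proof -
  have ia: "iv a \<in> Q" "m a (iv a) = e" using iv assms(1) by auto
  have "m (m (m a (iv a)) a) z = m a (m (iv a) (m a z))" using bol[OF assms(1) ia(1) assms(2)] .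
  then have "m a z = m a (m (iv a) (m a z))" using assms ia lid by simp
  then show ?thesis using lcancel[OF assms(1), of z "m (iv a) (m a z)"] assms ia closed by simp
qed

lemma lip2: "a\<in>Q \<Longrightarrow> z\<in>Q \<Longrightarrow> m a (m (iv a) z) = z"
  using lip[of "iv a" z] iv iv_iv by simp

lemma rip: assumes "w\<in>Q" "x\<in>Q" shows "m (m w x) (iv x) = w"
proof -
  define y where "y = m (iv x) w"
  have y: "y \<in> Q" "m x y = w" using assms iv closed lip2 y_def by auto
  have "m (m (m x y) x) (iv x) = m x (m y (m x (iv x)))" using bol assms iv y by blast
  then show ?thesis using y assms iv rid by simp
qed

lemma rip2: "w\<in>Q \<Longrightarrow> x\<in>Q \<Longrightarrow> m (m w (iv x)) x = w"
  using rip[of w "iv x"] iv iv_iv by simp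

lemma aaip: assumes "a\<in>Q" "b\<in>Q" shows "iv (m a b) = m (iv b) (iv a)"
proof -
  define w where "w = iv (m a b)"
  have w: "w \<in> Q" "iv w = m a b" using w_def iv iv_iv closed assms by auto
  have "a = m (iv w) (iv b)" using rip assms w by simp
  then have "m w a = iv b" using lip2 w iv assms by metis
  then have "m (iv b) (iv a) = m (m w a) (iv a)" by simp
  also have "\<dots> = w" using rip w assms by simp
  finally show ?thesis using w_def by simp
qed

lemma rbol: assumes "a\<in>Q" "b\<in>Q" "c\<in>Q"
  shows "m (m (m a b) c) b = m a (m (m b c) b)"
proof -
  have Q: "iv a \<in> Q" "iv b \<in> Q" "iv c \<in> Q" using iv assms by auto
  have "iv (m (m (m a b) c) b) = m (iv b) (m (iv c) (m (iv b) (iv a)))"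
    using aaip assms closed by simp
  also have "\<dots> = m (m (m (iv b) (iv c)) (iv b)) (iv a)" using bol Q by simp
  also have "\<dots> = m (m (iv b) (m (iv c) (iv b))) (iv a)" using flex Q by simp
  also have "\<dots> = iv (m a (m (m b c) b))" using aaip assms closed by simp
  finally have "iv (m (m (m a b) c) b) = iv (m a (m (m b c) b))" .
  then show ?thesis using iv_iv assms closed by metis
qed

lemma pw_Q: "u\<in>Q \<Longrightarrow> loop_pow m e u n \<in> Q"
  by (induction n) (auto simp: e_in closed)

lemma pw_right: "u\<in>Q \<Longrightarrow> m (loop_pow m e u n) u = loop_pow m e u (Suc n)"
proof (induction n)
  case 0 then show ?case using lid rid by simp
next
  case (Suc n)
  then show ?case using flex pw_Q by simp
qed

lemma L_pow: "u\<in>Q \<Longrightarrow> a\<in>Q \<Longrightarrow> m (loop_pow m e u n) a = (m u ^^ n) a"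
proof (induction n arbitrary: a rule: less_induct)
  case (less n)
  show ?case
  proof (cases n)
    case 0 then show ?thesis using lid less by simp
  next
    case (Suc k)
    show ?thesis
    proof (cases k)
      case 0 then show ?thesis using Suc less rid by simp
    next
      case (Suc j)
      have pj: "loop_pow m e u j \<in> Q" using pw_Q less by blast
      have "loop_pow m e u n = m u (m (loop_pow m e u j) u)"
        using \<open>n = Suc k\<close> Suc pw_right less by simp
      also have "\<dots> = m (m u (loop_pow m e u j)) u" using flex less pj by simp
      finally have "m (loop_pow m e u n) a = m u (m (loop_pow m e u j) (m u a))"
        using bol less pj by simp
      also have "\<dots> = m u ((m u ^^ j) (m u a))" using less Suc \<open>n = Suc k\<close> closed by simp
      also have "\<dots> = (m u ^^ n) a" using Suc \<open>n = Suc k\<close> by (simp add: funpow_swap1)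
      finally show ?thesis .
    qed
  qed
qed

lemma fix_iff: "u\<in>Q \<Longrightarrow> a\<in>Q \<Longrightarrow> (m u ^^ n) a = a \<longleftrightarrow> loop_pow m e u n = e"
  using L_pow[of u a n] rcancel[of a "loop_pow m e u n" e] pw_Q lid e_in by auto

lemma cyc_L: "u\<in>Q \<Longrightarrow> a\<in>Q \<Longrightarrow> cycle_length (m u) a = loop_order m e u"
  unfolding cycle_length_def loop_order_def using fix_iff by simp

lemma SL: "subloop S Q m e \<Longrightarrow> S \<subseteq> Q \<and> e \<in> S \<and> (\<forall>a\<in>S. \<forall>b\<in>S. m a b \<in> S) \<and>
   (\<forall>a\<in>S. \<forall>b\<in>S. \<exists>!x. x \<in> S \<and> m a x = b)"
  unfolding subloop_def loop_def by (elim conjE) (intro conjI)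

lemma S_sub: "subloop S Q m e \<Longrightarrow> S \<subseteq> Q"
  using SL by (rule conjunct1)

lemma S_e: "subloop S Q m e \<Longrightarrow> e \<in> S"
  by (drule SL) (elim conjE)

lemma S_closed: "subloop S Q m e \<Longrightarrow> a\<in>S \<Longrightarrow> b\<in>S \<Longrightarrow> m a b \<in> S"
  by (drule SL) (elim conjE, blast)

lemma S_inv: assumes S: "subloop S Q m e" and a: "a\<in>S" shows "iv a \<in> S"
proof -
  have L: "\<forall>a\<in>S. \<forall>b\<in>S. \<exists>!x. x \<in> S \<and> m a x = b" using SL[OF S] by (elim conjE)
  have "\<exists>!x. x \<in> S \<and> m a x = e" using bspec[OF bspec[OF L a] S_e[OF S]] .
  then obtain x where x: "x \<in> S" "m a x = e" by (elim ex1E) blast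
  have "iv a = x" using iv_eq[of a x] x a S_sub[OF S] by blast
  then show ?thesis using x by simp
qed

lemma fxy_pt: assumes "S \<subseteq> Q" "x\<in>Q" "a\<in>S" shows "fxy m S x y (m x a) = m y a"
proof -
  have "(THE s. s \<in> S \<and> m x s = m x a) = a"
  proof (rule the_equality)
    show "a \<in> S \<and> m x a = m x a" using assms by simp
    fix s assume "s \<in> S \<and> m x s = m x a"
    then show "s = a" using lcancel[of x s a] assms by blast
  qed
  then show ?thesis unfolding fxy_def by simp
qed

lemma key: assumes "a\<in>Q" "b\<in>Q" "x\<in>Q" "y\<in>Q" "m x a = m y b"
  shows "m y a = m x (m (m a (iv b)) a)"
proof -
  have ib: "iv b \<in> Q" using iv assms by blast
  have "y = m (m y b) (iv b)" using rip assms by simp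
  also have "\<dots> = m (m x a) (iv b)" using assms by simp
  finally have "m y a = m (m (m x a) (iv b)) a" by simp
  also have "\<dots> = m x (m (m a (iv b)) a)" using rbol[OF assms(3,1) ib] .
  finally show ?thesis .
qed

lemma iter:
  assumes S: "subloop S Q m e" and xy: "x\<in>Q" "y\<in>Q" and sr: "s\<in>S" "r\<in>S" and eq: "m x s = m y r"
  shows "(m (m s (iv r)) ^^ n) s \<in> S \<and>
         m x ((m (m s (iv r)) ^^ Suc n) s) = m y ((m (m s (iv r)) ^^ n) s) \<and>
         (fxy m S x y ^^ n) (m x s) = m x ((m (m s (iv r)) ^^ n) s)"
proof (induction n)
  have SQ: "S \<subseteq> Q" using S_sub[OF S] .
  have sQ: "s \<in> Q" "r \<in> Q" using sr SQ by auto
  case 0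
  have "m y s = m x (m (m s (iv r)) s)" using key[OF sQ xy eq] .
  then show ?case using sr by simp
next
  have SQ: "S \<subseteq> Q" using S_sub[OF S] .
  define u where "u = m s (iv r)"
  have uS: "u \<in> S" unfolding u_def using S_closed[OF S] S_inv[OF S] sr by blast
  case (Suc n)
  define a where "a = (m u ^^ n) s"
  have aS: "a \<in> S" using Suc.IH a_def u_def by simp
  have a'S: "m u a \<in> S" using S_closed[OF S uS aS] .
  have h1: "m x (m u a) = m y a" using Suc.IH a_def u_def by simp
  have h2: "(fxy m S x y ^^ n) (m x s) = m x a" using Suc.IH a_def u_def by simp
  have aQ: "a \<in> Q" "m u a \<in> Q" "u \<in> Q" using aS a'S uS SQ by auto
  have "m y (m u a) = m x (m (m (m u a) (iv a)) (m u a))" using key[OF aQ(2,1) xy h1] .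
  also have "m (m u a) (iv a) = u" using rip aQ by simp
  finally have h3: "m y (m u a) = m x (m u (m u a))" .
  have h4: "(fxy m S x y ^^ Suc n) (m x s) = m y a"
    using h2 fxy_pt[OF SQ xy(1) aS] by simp
  show ?case using a'S h1 h3 h4 a_def u_def by simp
qed

lemma cyc_main:
  assumes S: "subloop S Q m e" and xy: "x\<in>Q" "y\<in>Q" and sr: "s\<in>S" "r\<in>S" and eq: "m x s = m y r"
  shows "cycle_length (fxy m S x y) (m x s) = loop_order m e (m s (iv r))"
proof -
  have SQ: "S \<subseteq> Q" using S_sub[OF S] .
  define u where "u = m s (iv r)"
  have uS: "u \<in> S" unfolding u_def using S_closed[OF S] S_inv[OF S] sr by blast
  have uQ: "u \<in> Q" "s \<in> Q" using uS sr SQ by auto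
  have P: "(fxy m S x y ^^ n) (m x s) = m x s \<longleftrightarrow> loop_pow m e u n = e" for n
  proof -
    have I: "(m u ^^ n) s \<in> S" "(fxy m S x y ^^ n) (m x s) = m x ((m u ^^ n) s)"
      using iter[OF S xy sr eq, of n] u_def by auto
    have "(fxy m S x y ^^ n) (m x s) = m x s \<longleftrightarrow> (m u ^^ n) s = s"
      using I lcancel[OF xy(1), of "(m u ^^ n) s" s] SQ uQ by auto
    also have "\<dots> \<longleftrightarrow> loop_pow m e u n = e" using fix_iff[OF uQ] .
    finally show ?thesis .
  qed
  show ?thesis unfolding cycle_length_def loop_order_def u_def[symmetric] using P by simp
qed

end

theorem lemma6p2:
  fixes Q S :: "'a set" and mult :: "'a \<Rightarrow> 'a \<Rightarrow> 'a" and e x y s r :: 'a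
  assumes "moufang_loop Q mult e"
    and "finite Q"
    and "subloop S Q mult e"
    and "x \<in> Q" and "y \<in> Q"
    and "lcoset mult x S \<inter> lcoset mult y S \<noteq> {}"
    and "s \<in> S" and "r \<in> S"
    and "mult x s = mult y r"
  shows "bij_betw (fxy mult S x y) (lcoset mult x S \<inter> lcoset mult y S)
                                   (lcoset mult x S \<inter> lcoset mult y S)
       \<and> cycle_length (fxy mult S x y) (mult x s)
           = loop_order mult e (mult s (loop_inv Q mult e r))
       \<and> (S \<noteq> {e} \<longrightarrow>
           (\<exists>ts. set ts \<subseteq> S - {e} \<and>
              card (lcoset mult x S \<inter> lcoset mult y S) = (\<Sum>t\<leftarrow>ts. loop_order mult e t)))"
proof -
  interpret mouf Q mult e using assms(1) by (unfold_locales)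
  have S: "subloop S Q mult e" by fact
  have SQ: "S \<subseteq> Q" using S_sub[OF S] .
  have xy: "x \<in> Q" "y \<in> Q" by fact+
  define A where "A = lcoset mult x S \<inter> lcoset mult y S"
  define f where "f = fxy mult S x y"
  have memA: "z \<in> A \<longleftrightarrow> (\<exists>a\<in>S. \<exists>b\<in>S. z = mult x a \<and> z = mult y b)" for z
    unfolding A_def lcoset_def by blast
  have AQ: "A \<subseteq> Q"
  proof
    fix z assume "z \<in> A"
    then obtain a where a: "a \<in> S" "z = mult x a" unfolding A_def lcoset_def by blast
    then show "z \<in> Q" using closed[OF xy(1)] SQ by blast
  qed
  have finA: "finite A" using AQ assms(2) finite_subset by blast
  have fA: "f ` A \<subseteq> A"
  proof
    fix w assume "w \<in> f ` A"
    then obtain z where z: "z \<in> A" "w = f z" by blast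
    then obtain a b where ab: "a\<in>S" "b\<in>S" "z = mult x a" "z = mult y b" using memA by blast
    have w: "w = mult y a" using fxy_pt[OF SQ xy(1) ab(1)] z(2) ab(3) f_def by simp
    have "mult y a = mult x (mult (mult a (iv b)) a)"
      using key[of a b x y] ab SQ xy by auto
    moreover have "mult (mult a (iv b)) a \<in> S" using S_closed[OF S] S_inv[OF S] ab by blast
    ultimately show "w \<in> A" using memA w ab by blast
  qed
  have injA: "inj_on f A"
  proof (rule inj_onI)
    fix z1 z2 assume z: "z1 \<in> A" "z2 \<in> A" "f z1 = f z2"
    obtain a1 where a1: "a1 \<in> S" "z1 = mult x a1" using z(1) memA by blast
    obtain a2 where a2: "a2 \<in> S" "z2 = mult x a2" using z(2) memA by blast
    have "mult y a1 = mult y a2" using z(3) fxy_pt[OF SQ xy(1) a1(1)] fxy_pt[OF SQ xy(1) a2(1)] a1 a2 f_def by simp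
    then have "a1 = a2" using lcancel[OF xy(2)] a1 a2 SQ by blast
    then show "z1 = z2" using a1 a2 by simp
  qed
  have bij: "bij_betw f A A" unfolding bij_betw_def using injA endo_inj_surj[OF finA fA injA] by blast
  have cyc: "cycle_length f (mult x s) = loop_order mult e (mult s (iv r))"
    using cyc_main[OF S xy assms(7,8,9)] f_def by simp
  have part3: "\<exists>ts. set ts \<subseteq> S - {e} \<and> card A = (\<Sum>t\<leftarrow>ts. loop_order mult e t)" if ne: "S \<noteq> {e}"
  proof (cases "x = y")
    case False
    show ?thesis
    proof (rule perm_sum[OF finA fA injA], intro ballI)
      fix z assume "z \<in> A"
      then obtain a b where ab: "a\<in>S" "b\<in>S" "z = mult x a" "z = mult y b" using memA by blast
      have c: "cycle_length f z = loop_order mult e (mult a (iv b))"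
        using cyc_main[OF S xy ab(1,2)] ab f_def by simp
      have uS: "mult a (iv b) \<in> S" using S_closed[OF S] S_inv[OF S] ab by blast
      have "mult a (iv b) \<noteq> e"
      proof
        assume h: "mult a (iv b) = e"
        have abQ: "a \<in> Q" "b \<in> Q" using ab SQ by auto
        have "a = mult (mult a (iv b)) b" using rip2[OF abQ] by simp
        also have "\<dots> = b" using h lid[OF abQ(2)] by simp
        finally have "mult x a = mult y a" using ab by simp
        then show False using rcancel[of a x y] ab SQ xy False by blast
      qed
      then show "\<exists>t\<in>S - {e}. cycle_length f z = loop_order mult e t" using c uS by blast
    qed
  next
    case True
    have "A = lcoset mult x S" unfolding A_def using True by simp
    have injx: "inj_on (mult x) S"
    proof (rule inj_onI)
      fix a b assume "a \<in> S" "b \<in> S" "mult x a = mult x b"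
      then show "a = b" using lcancel[OF xy(1), of a b] SQ by blast
    qed
    have cA: "card A = card S" unfolding \<open>A = lcoset mult x S\<close> lcoset_def
      using card_image[OF injx] .
    obtain t where t: "t \<in> S" "t \<noteq> e" using ne S_e[OF S] by blast
    have finS: "finite S" using SQ assms(2) finite_subset by blast
    have gS: "mult t ` S \<subseteq> S" using S_closed[OF S t(1)] by blast
    have injS: "inj_on (mult t) S"
    proof (rule inj_onI)
      fix a b assume "a \<in> S" "b \<in> S" "mult t a = mult t b"
      then show "a = b" using lcancel[of t a b] t SQ by blast
    qed
    have tQ: "t \<in> Q" using t SQ by blast
    have tT: "t \<in> S - {e}" using t by blast
    have "\<forall>z\<in>S. \<exists>u\<in>S - {e}. cycle_length (mult t) z = loop_order mult e u"
    proof
      fix z assume "z \<in> S"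
      then have "cycle_length (mult t) z = loop_order mult e t" using cyc_L[OF tQ] SQ by blast
      then show "\<exists>u\<in>S - {e}. cycle_length (mult t) z = loop_order mult e u" using tT by blast
    qed
    from perm_sum[OF finS gS injS this] obtain ts where
      "set ts \<subseteq> S - {e}" "card S = (\<Sum>t\<leftarrow>ts. loop_order mult e t)" by blast
    then show ?thesis using cA by metis
  qed
  have p3: "S \<noteq> {e} \<longrightarrow> (\<exists>ts. set ts \<subseteq> S - {e} \<and> card A = (\<Sum>t\<leftarrow>ts. loop_order mult e t))"
    using part3 by (rule impI)
  show ?thesis using conjI[OF bij conjI[OF cyc p3]] unfolding A_def f_def .
qed

end
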